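(* Let $0<a\le1$. For $x>0$ let $H(a,x):=\dfrac{e^{(1-a)x}}{e^x-1}-\dfrac1x$, and for $x,y>0$ let $$\mathcal{H}(a;x,y):=\frac{H(a,x+y)}{e^y-1}+\frac{H(1,y)}{x+y}.$$ Then $\mathcal{H}(a;x,y)<0$ for all $x,y>0$ if and only if $a\ge1/2$. *)

theory Defs
  imports Complex_Main
begin

definition H :: "real \<Rightarrow> real \<Rightarrow> real" where
  "H a x = exp ((1 - a) * x) / (exp x - 1) - 1 / x"

definition calH :: "real \<Rightarrow> real \<Rightarrow> real \<Rightarrow> real" where
  "calH a x y = H a (x + y) / (exp y - 1) + H 1 y / (x + y)"

end

theory Submission
  imports Defs
begin

lemma exp_strict: fixes y :: real assumes "0 < y" shows "y < exp y - 1"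
proof -
  obtain z where z: "0 < z" "z < y" "exp y - exp 0 = (y - 0) * exp z"
    using MVT2[of 0 y exp exp] assms by (auto intro!: derivative_eq_intros)
  have "1 < exp z" using z by simp
  then have "y * 1 < y * exp z" using assms by (intro mult_strict_left_mono) auto
  then show ?thesis using z by simp
qed

lemma calH_eq:
  assumes "0 < x" "0 < y"
  shows "calH a x y = exp ((1-a)*(x+y)) / ((exp (x+y) - 1) * (exp y - 1)) - 1 / (y*(x+y))"
proof -
  have E: "exp (x+y) - 1 \<noteq> 0" "exp y - 1 \<noteq> 0" "x + y \<noteq> 0" "y \<noteq> 0" using assms by auto
  have g: "\<And>A E F s y :: real. E \<noteq> 0 \<Longrightarrow> F \<noteq> 0 \<Longrightarrow> s \<noteq> 0 \<Longrightarrow> y \<noteq> 0 \<Longrightarrow>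
     (A/E - 1/s)/F + (1/F - 1/y)/s = A/(E*F) - 1/(y*s)"
    by (simp add: field_simps)
  show ?thesis unfolding calH_def H_def using g[OF E] by simp
qed

lemma calH_neg_iff:
  assumes "0 < x" "0 < y"
  shows "calH a x y < 0 \<longleftrightarrow> y*(x+y)*exp ((1-a)*(x+y)) < (exp (x+y) - 1) * (exp y - 1)"
proof -
  have p: "exp (x+y) - 1 > 0" "exp y - 1 > 0" "y*(x+y) > 0" using assms by auto
  have "calH a x y < 0 \<longleftrightarrow> exp ((1-a)*(x+y)) / ((exp (x+y) - 1) * (exp y - 1)) < 1 / (y*(x+y))"
    using calH_eq[OF assms] by simp
  also have "\<dots> \<longleftrightarrow> y*(x+y)*exp ((1-a)*(x+y)) < (exp (x+y) - 1) * (exp y - 1)"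
    using p by (simp add: divide_simps mult_pos_pos) (simp add: mult_ac)
  finally show ?thesis .
qed

lemma half_case:
  fixes a s :: real
  assumes "1/2 \<le> a" "0 < s"
  shows "s * exp ((1-a)*s) \<le> exp s - 1"
proof -
  have e1: "exp s - 1 = exp ((1-a)*s) * (exp (a*s) * (1 - exp (-s)))"
    by (simp add: algebra_simps flip: exp_add)
  have q: "0 \<le> 1 - exp (-s)" using assms by simp
  have "exp (s/2) \<le> exp (a*s)" using assms by (simp add: mult_right_mono)
  then have m: "exp (s/2) * (1 - exp (-s)) \<le> exp (a*s) * (1 - exp (-s))"
    using q by (rule mult_right_mono)
  have "s \<le> exp (s/2) * (1 - exp (-s))"
  proof -
    have eq: "exp (s/2) * (1 - exp (-s)) = exp (s/2) - exp (-(s/2))"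
      by (simp add: algebra_simps flip: exp_add)
    define \<psi> where "\<psi> t = exp t - exp (-t) - 2*t" for t :: real
    have d: "\<And>t. DERIV \<psi> t :> exp t + exp (-t) - 2"
      unfolding \<psi>_def by (auto intro!: derivative_eq_intros)
    have nn: "0 \<le> exp t + exp (-t) - 2" for t :: real
    proof -
      have "0 \<le> (exp (t/2) - exp (-(t/2)))^2" by simp
      also have "\<dots> = exp t + exp (-t) - 2"
        by (simp add: power2_eq_square algebra_simps flip: exp_add)
      finally show ?thesis .
    qed
    obtain z where "0 < z" "z < s/2" "\<psi> (s/2) - \<psi> 0 = (s/2 - 0) * (exp z + exp (-z) - 2)"
      using MVT2[of 0 "s/2" \<psi> "\<lambda>t. exp t + exp (-t) - 2"] d assms by auto
    moreover have "0 \<le> (s/2 - 0) * (exp z + exp (-z) - 2)" using nn[of z] assms by simp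
    ultimately have "0 \<le> \<psi> (s/2) - \<psi> 0" by linarith
    then show ?thesis unfolding eq \<psi>_def by simp
  qed
  with m have "s \<le> exp (a*s) * (1 - exp (-s))" by linarith
  then show ?thesis unfolding e1 by (simp add: mult_left_mono mult.commute)
qed

lemma small_case:
  fixes a :: real
  assumes "0 < a" "a < 1/2"
  shows "\<exists>s>0. exp s - 1 < s * exp ((1-a)*s)"
proof -
  define q where "q = ((1-a)/a)^2"
  have q1: "1 < q" unfolding q_def using assms
    by (simp add: one_less_power) 
  define \<delta> where "\<delta> = ln q"
  have dpos: "0 < \<delta>" unfolding \<delta>_def using q1 by simp
  have edel: "exp \<delta> = q" unfolding \<delta>_def using q1 by simp
  define s where "s = \<delta>/2"
  have spos: "0 < s" using dpos s_def by simp
  define \<phi> where "\<phi> t = exp (a*t) - exp ((a-1)*t) - t" for t :: real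
  define \<phi>1 where "\<phi>1 t = a*exp (a*t) - (a-1)*exp ((a-1)*t) - 1" for t :: real
  define \<phi>2 where "\<phi>2 t = a^2*exp (a*t) - (a-1)^2*exp ((a-1)*t)" for t :: real
  have d1: "\<And>t. DERIV \<phi> t :> \<phi>1 t"
    unfolding \<phi>_def \<phi>1_def by (auto intro!: derivative_eq_intros simp: algebra_simps)
  have d2: "\<And>t. DERIV \<phi>1 t :> \<phi>2 t"
    unfolding \<phi>1_def \<phi>2_def by (auto intro!: derivative_eq_intros simp: algebra_simps power2_eq_square)
  have neg2: "\<phi>2 z < 0" if "z < \<delta>" for z
  proof -
    have ez: "exp z < q" using that edel by (metis exp_less_cancel_iff)
    have e: "exp (a*z) = exp z * exp ((a-1)*z)" by (simp add: algebra_simps flip: exp_add)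
    have "a^2 * exp z < a^2 * q" using ez assms by simp
    also have "a^2 * q = (a-1)^2"
    proof -
      have "a^2 * q = (a * ((1-a)/a))^2" unfolding q_def by (simp only: power_mult_distrib)
      also have "a * ((1-a)/a) = 1 - a" using assms by simp
      finally show ?thesis by (simp add: power2_eq_square algebra_simps)
    qed
    finally have "a^2 * exp z * exp ((a-1)*z) < (a-1)^2 * exp ((a-1)*z)"
      by simp
    then show ?thesis unfolding \<phi>2_def e by (simp add: mult_ac)
  qed
  have neg1: "\<phi>1 t < 0" if "0 < t" "t \<le> s" for t
  proof -
    obtain z where z: "0 < z" "z < t" "\<phi>1 t - \<phi>1 0 = (t - 0) * \<phi>2 z"
      using MVT2[of 0 t \<phi>1 \<phi>2] d2 \<open>0 < t\<close> by auto
    have "z < \<delta>" using z that s_def dpos by linarith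
    then have "\<phi>2 z < 0" by (rule neg2)
    then have "t * \<phi>2 z < 0" using that by (simp add: mult_pos_neg)
    moreover have "\<phi>1 0 = 0" unfolding \<phi>1_def by simp
    ultimately show ?thesis using z by simp
  qed
  obtain z where z: "0 < z" "z < s" "\<phi> s - \<phi> 0 = (s - 0) * \<phi>1 z"
    using MVT2[of 0 s \<phi> \<phi>1] d1 spos by auto
  have "\<phi>1 z < 0" using neg1 z by simp
  then have "s * \<phi>1 z < 0" using spos by (simp add: mult_pos_neg)
  moreover have "\<phi> 0 = 0" unfolding \<phi>_def by simp
  ultimately have "\<phi> s < 0" using z by simp
  then have lt: "exp (a*s) - exp ((a-1)*s) < s" unfolding \<phi>_def by simp
  have "exp s - 1 = exp ((1-a)*s) * (exp (a*s) - exp ((a-1)*s))"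
    by (simp add: algebra_simps flip: exp_add)
  also have "\<dots> < exp ((1-a)*s) * s" using lt by simp
  finally show ?thesis using spos by (auto simp: mult.commute)
qed

theorem lemma3p10:
  fixes a :: real
  assumes "0 < a" and "a \<le> 1"
  shows "(\<forall>x y. 0 < x \<longrightarrow> 0 < y \<longrightarrow> calH a x y < 0) \<longleftrightarrow> a \<ge> 1/2"
proof
  assume "a \<ge> 1/2"
  show "\<forall>x y. 0 < x \<longrightarrow> 0 < y \<longrightarrow> calH a x y < 0"
  proof (intro allI impI)
    fix x y :: real assume xy: "0 < x" "0 < y"
    define s where "s = x + y"
    have s: "0 < s" using xy s_def by simp
    have h: "s * exp ((1-a)*s) \<le> exp s - 1" using half_case[OF \<open>a \<ge> 1/2\<close> s] .
    have p: "0 < s * exp ((1-a)*s)" using s by simp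
    have "y * (s * exp ((1-a)*s)) < (exp y - 1) * (s * exp ((1-a)*s))"
      using exp_strict[OF xy(2)] p by (rule mult_strict_right_mono)
    also have "\<dots> \<le> (exp y - 1) * (exp s - 1)"
      using h xy(2) by (intro mult_left_mono) auto
    finally have "y * s * exp ((1-a)*s) < (exp s - 1) * (exp y - 1)"
      by (simp add: mult_ac)
    then show "calH a x y < 0" using calH_neg_iff[OF xy] s_def by simp
  qed
next
  assume all: "\<forall>x y. 0 < x \<longrightarrow> 0 < y \<longrightarrow> calH a x y < 0"
  show "a \<ge> 1/2"
  proof (rule ccontr)
    assume "\<not> a \<ge> 1/2"
    then obtain s where s: "0 < s" and lt: "exp s - 1 < s * exp ((1-a)*s)"
      using small_case[of a] assms by auto
    have ep: "0 < exp s - 1" using s by simp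
    define c where "c = s * exp ((1-a)*s) / (exp s - 1)"
    have c1: "1 < c" unfolding c_def using lt ep by simp
    define y where "y = min (s/2) (ln c)"
    have ypos: "0 < y" unfolding y_def using s c1 by simp
    have ys: "y < s" unfolding y_def using s by simp
    have eyc: "exp y \<le> c" unfolding y_def using c1
      by (metis exp_ln exp_le_cancel_iff min.cobounded2 less_trans zero_less_one)
    have b1: "exp y - 1 \<le> y * exp y"
    proof -
      have "1 - y \<le> exp (-y)" using exp_ge_add_one_self[of "-y"] by simp
      then have "exp y * (1 - y) \<le> exp y * exp (-y)" by (simp add: mult_left_mono)
      then show ?thesis by (simp add: algebra_simps flip: exp_add)
    qed
    have "(exp s - 1) * (exp y - 1) \<le> (exp s - 1) * (y * exp y)"
      using b1 ep by (intro mult_left_mono) auto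
    also have "\<dots> \<le> (exp s - 1) * (y * c)"
      using eyc ep ypos by (intro mult_left_mono) auto
    also have "\<dots> = y * s * exp ((1-a)*s)" unfolding c_def using ep by simp
    finally have ge: "(exp s - 1) * (exp y - 1) \<le> y * s * exp ((1-a)*s)" .
    define x where "x = s - y"
    have xpos: "0 < x" using ys x_def by simp
    have "calH a x y < 0" using all xpos ypos by simp
    then have "y * (x+y) * exp ((1-a)*(x+y)) < (exp (x+y) - 1) * (exp y - 1)"
      using calH_neg_iff[OF xpos ypos] by simp
    then show False using ge x_def by simp
  qed
qed

end
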